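(* Let $E$ be a graph such that any two boundary paths of $E$ are shift-tail equivalent. Then every nonempty saturated hereditary subset of $E^0$ is equal to $E^0$.
   Context: A graph $E=(E^0,E^1,r,s)$ has vertex set $E^0$, edge set $E^1$, range and source maps. A vertex is singular if it emits no edges or infinitely many edges, regular otherwise. $H\subseteq E^0$ is hereditary if $s(e)\in H$ implies $r(e)\in H$ for every $e\in E^1$; it is saturated if every regular vertex $v$ with $r(s^{-1}(v))\subseteq H$ lies in $H$. Boundary paths: infinite paths $e_1e_2\cdots$ ($r(e_i)=s(e_{i+1})$) together with finite paths (including vertices as length-$0$ paths) whose range is singular. The shift $\sigma_E$ removes the first edge (fixes vertices; sends a single edge $e$ to $r(e)$); boundary paths $\alpha,\beta$ are shift-tail equivalent if $\sigma_E^m(\alpha)=\sigma_E^n(\beta)$ for some $m,n\in\mathbb{N}$. *)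

theory Defs
  imports Main
begin

definition is_graph :: "'v set \<Rightarrow> 'e set \<Rightarrow> ('e \<Rightarrow> 'v) \<Rightarrow> ('e \<Rightarrow> 'v) \<Rightarrow> bool" where
  "is_graph V Ed r s \<longleftrightarrow> (\<forall>e\<in>Ed. r e \<in> V \<and> s e \<in> V)"

definition emits :: "'e set \<Rightarrow> ('e \<Rightarrow> 'v) \<Rightarrow> 'v \<Rightarrow> 'e set" where
  "emits Ed s v = {e \<in> Ed. s e = v}"

definition singular :: "'e set \<Rightarrow> ('e \<Rightarrow> 'v) \<Rightarrow> 'v \<Rightarrow> bool" where
  "singular Ed s v \<longleftrightarrow> emits Ed s v = {} \<or> infinite (emits Ed s v)"

definition regular :: "'e set \<Rightarrow> ('e \<Rightarrow> 'v) \<Rightarrow> 'v \<Rightarrow> bool" where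
  "regular Ed s v \<longleftrightarrow> \<not> singular Ed s v"

definition hereditary :: "'v set \<Rightarrow> 'e set \<Rightarrow> ('e \<Rightarrow> 'v) \<Rightarrow> ('e \<Rightarrow> 'v) \<Rightarrow> 'v set \<Rightarrow> bool" where
  "hereditary V Ed r s H \<longleftrightarrow> H \<subseteq> V \<and> (\<forall>e\<in>Ed. s e \<in> H \<longrightarrow> r e \<in> H)"

definition saturated :: "'v set \<Rightarrow> 'e set \<Rightarrow> ('e \<Rightarrow> 'v) \<Rightarrow> ('e \<Rightarrow> 'v) \<Rightarrow> 'v set \<Rightarrow> bool" where
  "saturated V Ed r s H \<longleftrightarrow>
     (\<forall>v\<in>V. regular Ed s v \<and> r ` emits Ed s v \<subseteq> H \<longrightarrow> v \<in> H)"

text \<open>Paths: a vertex (length 0), a nonempty finite list of edges, or an infinite sequence of edges.\<close>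
datatype ('v, 'e) gpath = Vtx 'v | Fin "'e list" | Inf "nat \<Rightarrow> 'e"

fun is_boundary_path :: "'v set \<Rightarrow> 'e set \<Rightarrow> ('e \<Rightarrow> 'v) \<Rightarrow> ('e \<Rightarrow> 'v) \<Rightarrow> ('v, 'e) gpath \<Rightarrow> bool" where
  "is_boundary_path V Ed r s (Vtx v) \<longleftrightarrow> v \<in> V \<and> singular Ed s v"
| "is_boundary_path V Ed r s (Fin es) \<longleftrightarrow> es \<noteq> [] \<and> set es \<subseteq> Ed
     \<and> (\<forall>i. Suc i < length es \<longrightarrow> r (es ! i) = s (es ! Suc i))
     \<and> singular Ed s (r (last es))"
| "is_boundary_path V Ed r s (Inf f) \<longleftrightarrow> (\<forall>n. f n \<in> Ed \<and> r (f n) = s (f (Suc n)))"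

fun shift :: "('e \<Rightarrow> 'v) \<Rightarrow> ('v, 'e) gpath \<Rightarrow> ('v, 'e) gpath" where
  "shift r (Vtx v) = Vtx v"
| "shift r (Fin []) = Fin []"
| "shift r (Fin [e]) = Vtx (r e)"
| "shift r (Fin (e # e' # es)) = Fin (e' # es)"
| "shift r (Inf f) = Inf (\<lambda>n. f (Suc n))"

definition shift_tail_equiv :: "('e \<Rightarrow> 'v) \<Rightarrow> ('v, 'e) gpath \<Rightarrow> ('v, 'e) gpath \<Rightarrow> bool" where
  "shift_tail_equiv r \<alpha> \<beta> \<longleftrightarrow> (\<exists>m n. (shift r ^^ m) \<alpha> = (shift r ^^ n) \<beta>)"

end

theory Submission
  imports Defs
begin

fun inX :: "('e \<Rightarrow> 'v) \<Rightarrow> ('e \<Rightarrow> 'v) \<Rightarrow> 'v set \<Rightarrow> ('v, 'e) gpath \<Rightarrow> bool" where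
  "inX r s X (Vtx v) \<longleftrightarrow> v \<in> X"
| "inX r s X (Fin es) \<longleftrightarrow> es \<noteq> [] \<and> (\<forall>e\<in>set es. s e \<in> X \<and> r e \<in> X)"
| "inX r s X (Inf f) \<longleftrightarrow> (\<forall>n. s (f n) \<in> X \<and> r (f n) \<in> X)"

lemma inX_shift: "inX r s X p \<Longrightarrow> inX r s X (shift r p)"
  by (induction r p rule: shift.induct) auto

lemma inX_shifts: "inX r s X p \<Longrightarrow> inX r s X ((shift r ^^ m) p)"
  by (induction m) (auto simp: inX_shift)

lemma inX_disj: "inX r s X p \<Longrightarrow> inX r s Y p \<Longrightarrow> X \<inter> Y \<noteq> {}"
proof (cases p)
  case (Fin es)
  moreover assume "inX r s X p" "inX r s Y p"
  ultimately show ?thesis by (cases es) auto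
qed auto

lemma exists_path:
  assumes X: "\<forall>v\<in>X. singular Ed s v \<or> (\<exists>e\<in>Ed. s e = v \<and> r e \<in> X)"
    and XV: "X \<subseteq> V" and v: "v \<in> X"
  shows "\<exists>p. is_boundary_path V Ed r s p \<and> inX r s X p"
proof -
  define nxt where "nxt = (\<lambda>v. SOME e. e \<in> Ed \<and> s e = v \<and> r e \<in> X)"
  have nxt: "nxt x \<in> Ed \<and> s (nxt x) = x \<and> r (nxt x) \<in> X" if "x \<in> X" "\<not> singular Ed s x" for x
  proof -
    from X that have "\<exists>e. e \<in> Ed \<and> s e = x \<and> r e \<in> X" by blast
    then show ?thesis unfolding nxt_def by (rule someI_ex)
  qed
  define u where "u = rec_nat v (\<lambda>_ x. r (nxt x))"
  have u0: "u 0 = v" and uS: "\<And>n. u (Suc n) = r (nxt (u n))" by (simp_all add: u_def)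
  have uX: "(\<forall>i<n. \<not> singular Ed s (u i)) \<Longrightarrow> u n \<in> X" for n
  proof (induction n)
    case 0 then show ?case using u0 v by simp
  next
    case (Suc n)
    then have "u n \<in> X" "\<not> singular Ed s (u n)" by auto
    then show ?case using nxt uS by simp
  qed
  show ?thesis
  proof (cases "\<exists>n. singular Ed s (u n)")
    case False
    then have all: "u n \<in> X \<and> \<not> singular Ed s (u n)" for n using uX by blast
    let ?p = "Inf (\<lambda>n. nxt (u n))"
    have "nxt (u n) \<in> Ed \<and> r (nxt (u n)) = s (nxt (u (Suc n)))" for n
      using all[of n] all[of "Suc n"] nxt[of "u n"] nxt[of "u (Suc n)"] uS[of n] by simp
    then have "is_boundary_path V Ed r s ?p" by simp
    moreover have "inX r s X ?p" using all nxt by auto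
    ultimately show ?thesis by blast
  next
    case True
    define k where "k = (LEAST n. singular Ed s (u n))"
    have sk: "singular Ed s (u k)" unfolding k_def using True by (rule LeastI_ex)
    have ns: "\<not> singular Ed s (u i)" if "i < k" for i using that not_less_Least k_def by blast
    have ukX: "u i \<in> X" if "i \<le> k" for i using uX ns that by (meson less_le_trans)
    show ?thesis
    proof (cases "k = 0")
      case True
      then show ?thesis using sk u0 v XV by (intro exI[of _ "Vtx v"]) auto
    next
      case False
      let ?es = "map (\<lambda>i. nxt (u i)) [0..<k]"
      have e: "nxt (u i) \<in> Ed \<and> s (nxt (u i)) = u i \<and> r (nxt (u i)) \<in> X" if "i < k" for i
        using nxt ukX ns that by simp
      have "last ?es = nxt (u (k - 1))" using False by (simp add: last_map)
      then have lst: "r (last ?es) = u k" using False uS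
        by (metis Suc_pred' neq0_conv)
      have c: "r (?es ! i) = s (?es ! Suc i)" if "Suc i < length ?es" for i
        using that e[of i] e[of "Suc i"] uS[of i] by simp
      have "set ?es \<subseteq> Ed" using e by auto
      then have "is_boundary_path V Ed r s (Fin ?es)"
        using False c lst sk by (simp only: is_boundary_path.simps) simp
      moreover have "inX r s X (Fin ?es)" using False e ukX by auto
      ultimately show ?thesis by blast
    qed
  qed
qed

theorem lemma4p4:
  fixes V :: "'v set" and Ed :: "'e set" and r s :: "'e \<Rightarrow> 'v" and H :: "'v set"
  assumes "is_graph V Ed r s"
    and "\<forall>\<alpha> \<beta>. is_boundary_path V Ed r s \<alpha> \<and> is_boundary_path V Ed r s \<beta>
                 \<longrightarrow> shift_tail_equiv r \<alpha> \<beta>"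
    and "H \<noteq> {}" and "hereditary V Ed r s H" and "saturated V Ed r s H"
  shows "H = V"
proof (rule ccontr)
  assume ne: "H \<noteq> V"
  have HV: "H \<subseteq> V" using assms(4) unfolding hereditary_def by blast
  then obtain v where v: "v \<in> V - H" using ne by blast
  obtain w where w: "w \<in> H" using assms(3) by blast
  have XH: "\<forall>x\<in>H. singular Ed s x \<or> (\<exists>e\<in>Ed. s e = x \<and> r e \<in> H)"
  proof
    fix x assume "x \<in> H"
    show "singular Ed s x \<or> (\<exists>e\<in>Ed. s e = x \<and> r e \<in> H)"
    proof (cases "singular Ed s x")
      case False
      then obtain e where "e \<in> emits Ed s x" unfolding singular_def by blast
      then show ?thesis using assms(4) \<open>x \<in> H\<close> unfolding hereditary_def emits_def by auto
    qed simp
  qed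
  have XN: "\<forall>x\<in>V - H. singular Ed s x \<or> (\<exists>e\<in>Ed. s e = x \<and> r e \<in> V - H)"
  proof
    fix x assume x: "x \<in> V - H"
    show "singular Ed s x \<or> (\<exists>e\<in>Ed. s e = x \<and> r e \<in> V - H)"
    proof (cases "singular Ed s x")
      case False
      then have "\<not> r ` emits Ed s x \<subseteq> H" using assms(5) x
        unfolding saturated_def regular_def by blast
      then obtain e where "e \<in> emits Ed s x" "r e \<notin> H" by blast
      then show ?thesis using assms(1) unfolding is_graph_def emits_def by auto
    qed simp
  qed
  obtain a where a: "is_boundary_path V Ed r s a" "inX r s H a"
    using exists_path[OF XH HV w] by blast
  obtain b where b: "is_boundary_path V Ed r s b" "inX r s (V - H) b"
    using exists_path[OF XN _ v] by blast
  obtain m n where mn: "(shift r ^^ m) a = (shift r ^^ n) b"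
    using assms(2) a b unfolding shift_tail_equiv_def by blast
  have "inX r s H ((shift r ^^ m) a)" using a inX_shifts by blast
  moreover have "inX r s (V - H) ((shift r ^^ m) a)" using b inX_shifts mn by metis
  ultimately have "H \<inter> (V - H) \<noteq> {}" by (rule inX_disj)
  then show False by blast
qed

end
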